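(* Let $0<\eta<1$, $I=[\eta,1]$, and $\mathcal{D}$ as in the context. For every $1\le p\le\infty$ there are constants $C,C_6>0$ independent of $n$ such that $\varepsilon_n(B_1(\mathcal{D}))_{L^p(I)}\le Ce^{-C_6n^{1/2}}$ for all $n\ge1$.
   Context: Dictionary: for $b\in(0,\infty)$ let $g(x,b)=\frac{\eta+b}{x+b}$ on $I$, and $\mathcal{D}=\{g(\cdot,b):b\in(0,\infty)\}$. $B_1(\mathcal{D})$ is the closure in $L^p(I)$ of $\{\sum_{j=1}^m c_jg_j: m\in\mathbb{N}, g_j\in\mathcal{D}, \sum_j|c_j|\le1\}$. Entropy numbers: $\varepsilon_n(F)_X=\inf\{\varepsilon>0: F\text{ is covered by }2^n\text{ balls of radius }\varepsilon\text{ in }X\}$. *)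

theory Defs
  imports "HOL-Analysis.Analysis" "HOL-Probability.Essential_Supremum"
begin

definition Lp_dist :: "ereal \<Rightarrow> real set \<Rightarrow> (real \<Rightarrow> real) \<Rightarrow> (real \<Rightarrow> real) \<Rightarrow> ereal" where
  "Lp_dist p I f g =
     (if p = \<infinity> then esssup (lebesgue_on I) (\<lambda>x. ereal \<bar>f x - g x\<bar>)
      else (let J = (\<integral>\<^sup>+ x. ennreal (\<bar>f x - g x\<bar> powr real_of_ereal p) \<partial>lebesgue_on I)
            in if J = \<infinity> then \<infinity> else ereal (enn2real J powr (1 / real_of_ereal p))))"

definition in_Lp :: "ereal \<Rightarrow> real set \<Rightarrow> (real \<Rightarrow> real) \<Rightarrow> bool" where
  "in_Lp p I f \<longleftrightarrow> f \<in> borel_measurable (lebesgue_on I) \<and> Lp_dist p I f (\<lambda>_. 0) < \<infinity>"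

definition dict_g :: "real \<Rightarrow> real \<Rightarrow> real \<Rightarrow> real" where
  "dict_g \<eta> b x = (\<eta> + b) / (x + b)"

definition dict_combs :: "real \<Rightarrow> (real \<Rightarrow> real) set" where
  "dict_combs \<eta> = {h. \<exists>(m::nat) (c::nat \<Rightarrow> real) (b::nat \<Rightarrow> real).
       (\<forall>j<m. 0 < b j) \<and> (\<Sum>j<m. \<bar>c j\<bar>) \<le> 1 \<and>
       h = (\<lambda>x. \<Sum>j<m. c j * dict_g \<eta> (b j) x)}"

definition B1 :: "ereal \<Rightarrow> real set \<Rightarrow> real \<Rightarrow> (real \<Rightarrow> real) set" where
  "B1 p I \<eta> = {f. in_Lp p I f \<and>
       (\<forall>e>0. \<exists>h\<in>dict_combs \<eta>. Lp_dist p I f h < ereal e)}"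

definition entropy_number :: "ereal \<Rightarrow> real set \<Rightarrow> (real \<Rightarrow> real) set \<Rightarrow> nat \<Rightarrow> ereal" where
  "entropy_number p I F n = Inf {ereal e | e. e > 0 \<and>
      (\<exists>Cs. finite Cs \<and> card Cs \<le> 2 ^ n \<and> (\<forall>c\<in>Cs. in_Lp p I c) \<and>
            (\<forall>f\<in>F. \<exists>c\<in>Cs. Lp_dist p I f c \<le> ereal e))}"

end

theory Submission
  imports Defs
begin

definition mid :: "real \<Rightarrow> real" where "mid \<eta> = (1 + \<eta>) / 2"
definition rad :: "real \<Rightarrow> real" where "rad \<eta> = (1 - \<eta>) / 2"
definition qq :: "real \<Rightarrow> real" where "qq \<eta> = rad \<eta> / mid \<eta>"
definition tau :: "real \<Rightarrow> real \<Rightarrow> real" where "tau \<eta> x = (x - mid \<eta>) / rad \<eta>"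
definition ak :: "real \<Rightarrow> nat \<Rightarrow> real \<Rightarrow> real" where
  "ak \<eta> k b = (\<eta> + b) / (mid \<eta> + b) * (- (rad \<eta> / (mid \<eta> + b))) ^ k"

lemma qq_bounds: "0 < \<eta> \<Longrightarrow> \<eta> < 1 \<Longrightarrow> 0 < qq \<eta> \<and> qq \<eta> < 1"
  by (auto simp: qq_def rad_def mid_def divide_simps)

lemma ak_bound:
  assumes "0 < \<eta>" "\<eta> < 1" "0 < b"
  shows "\<bar>ak \<eta> k b\<bar> \<le> 1"
proof -
  have s: "mid \<eta> + b > 0" "rad \<eta> > 0" "rad \<eta> < mid \<eta> + b" "\<eta> + b \<le> mid \<eta> + b"
    using assms by (auto simp: mid_def rad_def field_simps)
  have "\<bar>(\<eta> + b) / (mid \<eta> + b)\<bar> \<le> 1" using s assms by (simp add: abs_le_iff divide_simps)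
  moreover have "\<bar>(- (rad \<eta> / (mid \<eta> + b))) ^ k\<bar> \<le> 1"
    unfolding power_abs abs_minus_cancel using s
    by (intro power_le_one) auto
  ultimately show ?thesis unfolding ak_def abs_mult
    by (metis abs_ge_zero mult_le_one)
qed

lemma tau_bound: "0 < \<eta> \<Longrightarrow> \<eta> < 1 \<Longrightarrow> x \<in> {\<eta>..1} \<Longrightarrow> \<bar>tau \<eta> x\<bar> \<le> 1"
  by (auto simp: tau_def mid_def rad_def abs_le_iff divide_simps)

lemma geom:
  assumes "0 < \<eta>" "\<eta> < 1" "0 < b" "x \<in> {\<eta>..1}"
  shows "\<bar>dict_g \<eta> b x - (\<Sum>k<t. ak \<eta> k b * tau \<eta> x ^ k)\<bar> \<le> qq \<eta> ^ t / (1 - qq \<eta>)"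
proof -
  define s where "s = mid \<eta> + b"
  define u where "u = (x - mid \<eta>) / s"
  define q where "q = qq \<eta>"
  have s: "s > 0" "rad \<eta> > 0" "\<eta> + b \<le> s" "\<eta> + b > 0" "mid \<eta> > 0"
    using assms by (auto simp: s_def mid_def rad_def field_simps)
  have q: "0 < q" "q < 1" using qq_bounds assms q_def by auto
  have xm: "\<bar>x - mid \<eta>\<bar> \<le> rad \<eta>" using assms by (auto simp: mid_def rad_def field_simps)
  have uq: "\<bar>u\<bar> \<le> q"
  proof -
    have "\<bar>u\<bar> = \<bar>x - mid \<eta>\<bar> / s" using s by (simp add: u_def)
    also have "\<dots> \<le> rad \<eta> / s" using xm s by (simp add: divide_right_mono)
    also have "\<dots> \<le> rad \<eta> / mid \<eta>" using s assms by (intro divide_left_mono) (auto simp: s_def)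
    finally show ?thesis by (simp add: q_def qq_def)
  qed
  have u1: "1 + u \<ge> 1 - q" using uq by auto
  have u1p: "1 + u > 0" using u1 q by auto
  have trm: "ak \<eta> k b * tau \<eta> x ^ k = (\<eta> + b) / s * (- u) ^ k" for k
  proof -
    have e: "- (rad \<eta> / s) * ((x - mid \<eta>) / rad \<eta>) = - u"
      using s by (simp add: u_def)
    have "ak \<eta> k b * tau \<eta> x ^ k = (\<eta> + b) / s * ((- (rad \<eta> / s)) ^ k * ((x - mid \<eta>) / rad \<eta>) ^ k)"
      unfolding ak_def tau_def s_def by (simp only: mult.assoc)
    also have "\<dots> = (\<eta> + b) / s * (- u) ^ k"
      unfolding power_mult_distrib[symmetric] e ..
    finally show ?thesis .
  qed
  have gx: "dict_g \<eta> b x = (\<eta> + b) / s * (1 / (1 + u))"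
  proof -
    have "x + b = s * (1 + u)" using s by (simp add: u_def s_def field_simps)
    then show ?thesis using s u1p by (simp add: dict_g_def)
  qed
  have sumeq: "(\<Sum>k<t. (- u) ^ k) = (1 - (- u) ^ t) / (1 + u)"
    using u1p by (subst sum_gp_strict) auto
  have "dict_g \<eta> b x - (\<Sum>k<t. ak \<eta> k b * tau \<eta> x ^ k)
      = (\<eta> + b) / s * (1 / (1 + u)) - (\<eta> + b) / s * (\<Sum>k<t. (- u) ^ k)"
    unfolding trm gx sum_distrib_left ..
  also have "\<dots> = (\<eta> + b) / s * (1 / (1 + u) - (1 - (- u) ^ t) / (1 + u))"
    unfolding sumeq by (simp add: right_diff_distrib)
  also have "1 / (1 + u) - (1 - (- u) ^ t) / (1 + u) = (- u) ^ t / (1 + u)"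
    by (simp add: diff_divide_distrib)
  finally have diff: "dict_g \<eta> b x - (\<Sum>k<t. ak \<eta> k b * tau \<eta> x ^ k) = (\<eta> + b) / s * ((- u) ^ t / (1 + u))" .
  have c1: "\<bar>(\<eta> + b) / s\<bar> \<le> 1" using s by (simp add: abs_le_iff divide_simps)
  have c2: "\<bar>(- u) ^ t / (1 + u)\<bar> \<le> q ^ t / (1 - q)"
  proof -
    have "\<bar>(- u) ^ t / (1 + u)\<bar> = \<bar>u\<bar> ^ t / (1 + u)" using u1p by (simp add: power_abs)
    also have "\<dots> \<le> q ^ t / (1 + u)" using uq u1p by (intro divide_right_mono power_mono) auto
    also have "\<dots> \<le> q ^ t / (1 - q)" using u1 q by (intro divide_left_mono) auto
    finally show ?thesis .
  qed
  have "\<bar>(\<eta> + b) / s * ((- u) ^ t / (1 + u))\<bar> \<le> 1 * (q ^ t / (1 - q))"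
    unfolding abs_mult by (rule mult_mono[OF c1 c2]) auto
  then show ?thesis using diff q_def by simp
qed

lemma id_meas[measurable]: "(\<lambda>x::real. x) \<in> borel_measurable (lebesgue_on I)"
  by (intro measurable_restrict_space1) (simp add: measurable_completion)

lemma space_leb_on: "space (lebesgue_on I) = I"
  by simp

lemma emeas_I: "\<eta> \<le> 1 \<Longrightarrow> emeasure (lebesgue_on {\<eta>..1::real}) (space (lebesgue_on {\<eta>..1})) = ennreal (1 - \<eta>)"
  by (simp add: emeasure_restrict_space)

lemma Lp_tri:
  fixes f h c :: "real \<Rightarrow> real"
  assumes eta: "0 < \<eta>" "\<eta> < 1" and p: "1 \<le> p"
    and mf: "f \<in> borel_measurable (lebesgue_on {\<eta>..1})"
    and mh: "h \<in> borel_measurable (lebesgue_on {\<eta>..1})"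
    and mc: "c \<in> borel_measurable (lebesgue_on {\<eta>..1})"
    and fh: "Lp_dist p {\<eta>..1} f h < ereal E"
    and hc: "\<forall>x\<in>{\<eta>..1}. \<bar>h x - c x\<bar> \<le> E" and E: "E > 0"
  shows "Lp_dist p {\<eta>..1} f c \<le> ereal (4 * E)"
proof (cases "p = \<infinity>")
  case True
  define M where "M = lebesgue_on {\<eta>..1::real}"
  have es: "esssup M (\<lambda>x. ereal \<bar>f x - h x\<bar>) < ereal E"
    using fh True by (simp add: Lp_dist_def M_def)
  have "AE x in M. ereal \<bar>f x - c x\<bar> \<le> ereal (4 * E)"
    using AE_space esssup_AE[of "\<lambda>x. ereal \<bar>f x - h x\<bar>" M]
  proof eventually_elim
    case (elim x)
    then have xI: "x \<in> {\<eta>..1}" by (simp add: M_def)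
    have "\<bar>f x - h x\<bar> < E" using order_le_less_trans[OF elim(2) es] by simp
    moreover have "\<bar>h x - c x\<bar> \<le> E" using hc xI by auto
    ultimately show ?case using E by simp
  qed
  moreover have "(\<lambda>x. ereal \<bar>f x - c x\<bar>) \<in> borel_measurable M"
    using mf mc unfolding M_def by measurable
  ultimately have "esssup M (\<lambda>x. ereal \<bar>f x - c x\<bar>) \<le> ereal (4 * E)"
    by (intro esssup_I)
  then show ?thesis using True by (simp add: Lp_dist_def M_def)
next
  case False
  then obtain P where pP: "p = ereal P" using p by (cases p) auto
  have P1: "P \<ge> 1" using p pP by simp
  define M where "M = lebesgue_on {\<eta>..1::real}"
  define Jh where "Jh = (\<integral>\<^sup>+ x. ennreal (\<bar>f x - h x\<bar> powr P) \<partial>M)"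
  define Jc where "Jc = (\<integral>\<^sup>+ x. ennreal (\<bar>f x - c x\<bar> powr P) \<partial>M)"
  have fh': "Jh \<noteq> \<infinity> \<and> enn2real Jh powr (1 / P) < E"
    using fh pP unfolding Lp_dist_def Jh_def M_def by (auto simp: Let_def split: if_splits)
  have Jhle: "enn2real Jh \<le> E powr P"
  proof -
    have a0: "enn2real Jh \<ge> 0" by simp
    show ?thesis
    proof (cases "enn2real Jh = 0")
      case True then show ?thesis by simp
    next
      case False
      have "enn2real Jh = (enn2real Jh powr (1 / P)) powr P"
        using False a0 P1 by (simp add: powr_powr)
      also have "\<dots> \<le> E powr P" using fh' P1 by (intro powr_mono2) auto
      finally show ?thesis .
    qed
  qed
  have JhE: "Jh \<le> ennreal (E powr P)"
    using fh' Jhle by (intro enn2real_le) auto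
  have pw: "\<bar>f x - c x\<bar> powr P \<le> 2 powr P * (\<bar>f x - h x\<bar> powr P + E powr P)"
    if x: "x \<in> {\<eta>..1}" for x
  proof -
    define a where "a = \<bar>f x - h x\<bar>"
    have "\<bar>f x - c x\<bar> \<le> a + E" using hc x unfolding a_def by force
    also have "\<dots> \<le> 2 * max a E" by auto
    finally have "\<bar>f x - c x\<bar> powr P \<le> (2 * max a E) powr P"
      using P1 by (intro powr_mono2) auto
    also have "\<dots> = 2 powr P * max a E powr P" using E by (simp add: powr_mult)
    also have "max a E powr P \<le> a powr P + E powr P"
      by (cases "a \<le> E") (auto simp: max_def)
    finally show ?thesis unfolding a_def by simp
  qed
  have "Jc \<le> (\<integral>\<^sup>+ x. ennreal (2 powr P) * (ennreal (\<bar>f x - h x\<bar> powr P) + ennreal (E powr P)) \<partial>M)"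
    unfolding Jc_def
  proof (rule nn_integral_mono)
    fix x assume "x \<in> space M"
    then have "x \<in> {\<eta>..1}" by (simp add: M_def)
    then show "ennreal (\<bar>f x - c x\<bar> powr P) \<le> ennreal (2 powr P) * (ennreal (\<bar>f x - h x\<bar> powr P) + ennreal (E powr P))"
    proof -
      have "ennreal (2 powr P) * (ennreal (\<bar>f x - h x\<bar> powr P) + ennreal (E powr P))
          = ennreal (2 powr P * (\<bar>f x - h x\<bar> powr P + E powr P))"
        by (simp add: ennreal_mult ennreal_plus)
      then show ?thesis using pw[OF \<open>x \<in> {\<eta>..1}\<close>] by (simp add: ennreal_leI)
    qed
  qed
  also have "\<dots> = ennreal (2 powr P) * (Jh + ennreal (E powr P) * emeasure M (space M))"
  proof -
    have m1: "(\<lambda>x. ennreal (\<bar>f x - h x\<bar> powr P)) \<in> borel_measurable M"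
      using mf mh unfolding M_def by measurable
    have m2: "(\<lambda>x. ennreal (\<bar>f x - h x\<bar> powr P) + ennreal (E powr P)) \<in> borel_measurable M"
      using m1 by simp
    have "(\<integral>\<^sup>+ x. ennreal (\<bar>f x - h x\<bar> powr P) + ennreal (E powr P) \<partial>M)
       = Jh + ennreal (E powr P) * emeasure M (space M)"
      unfolding Jh_def by (subst nn_integral_add[OF m1]) (auto simp: nn_integral_const)
    then show ?thesis unfolding nn_integral_cmult[OF m2] by simp
    
  qed
  also have "\<dots> \<le> ennreal (2 powr P) * (ennreal (E powr P) + ennreal (E powr P) * 1)"
  proof -
    have "emeasure M (space M) \<le> 1" using eta unfolding M_def
      by (simp add: emeasure_restrict_space ennreal_le_1)
    then have "ennreal (E powr P) * emeasure M (space M) \<le> ennreal (E powr P) * 1"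
      by (intro mult_left_mono) auto
    then show ?thesis by (rule mult_left_mono[OF add_mono[OF JhE]]) simp
  qed
  also have "\<dots> = ennreal (2 powr P * 2 * E powr P)"
  proof -
    have "ennreal (E powr P) + ennreal (E powr P) * 1 = ennreal (2 * E powr P)"
      by (simp add: ennreal_plus[symmetric] del: ennreal_plus)
    then show ?thesis by (simp add: ennreal_mult[symmetric] mult.assoc del: ennreal_plus)
  qed
  finally have Jcle: "Jc \<le> ennreal (2 powr P * 2 * E powr P)" .
  then have Jcfin: "Jc \<noteq> \<infinity>"
    using ennreal_less_top[of "2 powr P * 2 * E powr P"] by (auto simp: top_unique)
  have "enn2real Jc \<le> 2 powr P * 2 * E powr P"
    using Jcle by (intro enn2real_leI) auto
  also have "\<dots> \<le> 2 powr P * 2 powr P * E powr P"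
    using P1 powr_mono[of 1 P 2] by (intro mult_right_mono mult_left_mono) auto
  also have "\<dots> = (4 * E) powr P" using E by (simp add: powr_mult[symmetric])
  finally have "enn2real Jc powr (1 / P) \<le> ((4 * E) powr P) powr (1 / P)"
    using P1 by (intro powr_mono2) auto
  also have "\<dots> = 4 * E" using E P1 by (simp add: powr_powr)
  finally show ?thesis using Jcfin pP False
    unfolding Lp_dist_def Jc_def M_def by (simp add: Let_def)
qed

lemma in_Lp_bounded:
  fixes c :: "real \<Rightarrow> real"
  assumes eta: "0 < \<eta>" "\<eta> < 1" and p: "1 \<le> p"
    and mc: "c \<in> borel_measurable (lebesgue_on {\<eta>..1})"
    and B: "\<forall>x\<in>{\<eta>..1}. \<bar>c x\<bar> \<le> B"
  shows "in_Lp p {\<eta>..1} c"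
proof -
  define M where "M = lebesgue_on {\<eta>..1::real}"
  have "Lp_dist p {\<eta>..1} c (\<lambda>_. 0) < \<infinity>"
  proof (cases "p = \<infinity>")
    case True
    have "AE x in M. ereal \<bar>c x - 0\<bar> \<le> ereal B"
      using AE_space
    proof eventually_elim
      case (elim x) then show ?case using B by (simp add: M_def)
    qed
    moreover have "(\<lambda>x. ereal \<bar>c x - 0\<bar>) \<in> borel_measurable M"
      using mc unfolding M_def by measurable
    ultimately have "esssup M (\<lambda>x. ereal \<bar>c x - 0\<bar>) \<le> ereal B"
      by (intro esssup_I)
    then have "esssup M (\<lambda>x. ereal \<bar>c x - 0\<bar>) < \<infinity>"
      using le_less_trans by fastforce
    then show ?thesis using True by (simp add: Lp_dist_def M_def)
  next
    case False
    then obtain P where pP: "p = ereal P" using p by (cases p) auto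
    have P1: "P \<ge> 1" using p pP by simp
    have "(\<integral>\<^sup>+ x. ennreal (\<bar>c x - 0\<bar> powr P) \<partial>M) \<le> (\<integral>\<^sup>+ x. ennreal (B powr P) \<partial>M)"
    proof (rule nn_integral_mono)
      fix x assume "x \<in> space M"
      then have "\<bar>c x\<bar> \<le> B" using B by (simp add: M_def)
      then show "ennreal (\<bar>c x - 0\<bar> powr P) \<le> ennreal (B powr P)"
        using P1 by (intro ennreal_leI powr_mono2) auto
    qed
    also have "\<dots> = ennreal (B powr P) * ennreal (1 - \<eta>)"
      using eta by (simp add: nn_integral_const M_def emeasure_restrict_space)
    also have "\<dots> < \<infinity>" by (simp add: ennreal_mult_less_top)
    finally have "(\<integral>\<^sup>+ x. ennreal (\<bar>c x - 0\<bar> powr P) \<partial>M) \<noteq> \<infinity>" by simp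
    then show ?thesis using pP False by (simp add: Lp_dist_def M_def Let_def)
  qed
  then show ?thesis using mc by (simp add: in_Lp_def)
qed

definition alpha :: "real \<Rightarrow> (nat \<Rightarrow> real) \<Rightarrow> (nat \<Rightarrow> real) \<Rightarrow> nat \<Rightarrow> nat \<Rightarrow> real" where
  "alpha \<eta> c b M k = (\<Sum>j<M. c j * ak \<eta> k (b j))"

lemma comb_approx:
  assumes eta: "0 < \<eta>" "\<eta> < 1" and b: "\<forall>j<M. 0 < b j" and c: "(\<Sum>j<M. \<bar>c j\<bar>) \<le> 1"
    and x: "x \<in> {\<eta>..1}"
  shows "\<bar>(\<Sum>j<M. c j * dict_g \<eta> (b j) x) - (\<Sum>k<t. alpha \<eta> c b M k * tau \<eta> x ^ k)\<bar>
          \<le> qq \<eta> ^ t / (1 - qq \<eta>)"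
proof -
  define Q where "Q = qq \<eta> ^ t / (1 - qq \<eta>)"
  have Q0: "Q \<ge> 0" using qq_bounds[OF eta] by (simp add: Q_def)
  have "(\<Sum>k<t. alpha \<eta> c b M k * tau \<eta> x ^ k) = (\<Sum>j<M. c j * (\<Sum>k<t. ak \<eta> k (b j) * tau \<eta> x ^ k))"
    unfolding alpha_def sum_distrib_right sum_distrib_left by (subst sum.swap) (simp add: mult.assoc)
  then have "(\<Sum>j<M. c j * dict_g \<eta> (b j) x) - (\<Sum>k<t. alpha \<eta> c b M k * tau \<eta> x ^ k)
      = (\<Sum>j<M. c j * (dict_g \<eta> (b j) x - (\<Sum>k<t. ak \<eta> k (b j) * tau \<eta> x ^ k)))"
    by (simp add: sum_subtractf right_diff_distrib)
  also have "\<bar>\<dots>\<bar> \<le> (\<Sum>j<M. \<bar>c j\<bar> * Q)"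
  proof -
    have "\<bar>\<Sum>j<M. c j * (dict_g \<eta> (b j) x - (\<Sum>k<t. ak \<eta> k (b j) * tau \<eta> x ^ k))\<bar>
        \<le> (\<Sum>j<M. \<bar>c j * (dict_g \<eta> (b j) x - (\<Sum>k<t. ak \<eta> k (b j) * tau \<eta> x ^ k))\<bar>)"
      by (rule sum_abs)
    also have "\<dots> \<le> (\<Sum>j<M. \<bar>c j\<bar> * Q)"
      unfolding abs_mult Q_def using geom[OF eta _ x] b
      by (intro sum_mono mult_left_mono) auto
    finally show ?thesis .
  qed
  also have "\<dots> = (\<Sum>j<M. \<bar>c j\<bar>) * Q" by (simp add: sum_distrib_right)
  also have "\<dots> \<le> 1 * Q" using c Q0 by (intro mult_right_mono) auto
  finally show ?thesis by (simp add: Q_def)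
qed

lemma alpha_bound:
  assumes eta: "0 < \<eta>" "\<eta> < 1" and b: "\<forall>j<M. 0 < b j" and c: "(\<Sum>j<M. \<bar>c j\<bar>) \<le> 1"
  shows "\<bar>alpha \<eta> c b M k\<bar> \<le> 1"
proof -
  have "\<bar>alpha \<eta> c b M k\<bar> \<le> (\<Sum>j<M. \<bar>c j * ak \<eta> k (b j)\<bar>)"
    unfolding alpha_def by (rule sum_abs)
  also have "\<dots> \<le> (\<Sum>j<M. \<bar>c j\<bar> * 1)"
    unfolding abs_mult using ak_bound[OF eta] b by (intro sum_mono mult_left_mono) auto
  finally show ?thesis using c by simp
qed

definition cen :: "real \<Rightarrow> nat \<Rightarrow> nat \<Rightarrow> (nat \<Rightarrow> int) \<Rightarrow> real \<Rightarrow> real" where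
  "cen \<eta> N t jj x = (\<Sum>k<t. of_int (jj k) / real N * tau \<eta> x ^ k)"

definition quant :: "nat \<Rightarrow> nat \<Rightarrow> (nat \<Rightarrow> real) \<Rightarrow> nat \<Rightarrow> int" where
  "quant N t a = restrict (\<lambda>k. \<lfloor>a k * real N\<rfloor>) {..<t}"

lemma quant_mem:
  assumes "N > 0" "\<forall>k. \<bar>a k\<bar> \<le> 1"
  shows "quant N t a \<in> PiE {..<t} (\<lambda>_. {- int N..int N})"
proof -
  have "\<lfloor>a k * real N\<rfloor> \<in> {- int N..int N}" for k
  proof -
    have "\<bar>a k * real N\<bar> \<le> real N" using assms(2)[rule_format, of k] by (simp add: abs_mult mult_left_le_one_le)
    then have "- real N \<le> a k * real N" "a k * real N \<le> real N" by linarith+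
    then show ?thesis by (simp add: le_floor_iff floor_le_iff)
  qed
  then show ?thesis by (auto simp: quant_def)
qed

lemma quant_err:
  assumes "N > 0" and tx: "\<bar>tau \<eta> x\<bar> \<le> 1"
  shows "\<bar>(\<Sum>k<t. a k * tau \<eta> x ^ k) - cen \<eta> N t (quant N t a) x\<bar> \<le> real t / real N"
proof -
  have "(\<Sum>k<t. a k * tau \<eta> x ^ k) - cen \<eta> N t (quant N t a) x
     = (\<Sum>k<t. (a k - of_int \<lfloor>a k * real N\<rfloor> / real N) * tau \<eta> x ^ k)"
    unfolding cen_def quant_def by (simp add: sum_subtractf left_diff_distrib)
  also have "\<bar>\<dots>\<bar> \<le> (\<Sum>k<t. \<bar>(a k - of_int \<lfloor>a k * real N\<rfloor> / real N) * tau \<eta> x ^ k\<bar>)"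
    by (rule sum_abs)
  also have "\<dots> \<le> (\<Sum>k<t. 1 / real N)"
  proof (rule sum_mono)
    fix k
    have e: "\<bar>a k - of_int \<lfloor>a k * real N\<rfloor> / real N\<bar> \<le> 1 / real N"
    proof -
      have "of_int \<lfloor>a k * real N\<rfloor> \<le> a k * real N" "a k * real N < of_int \<lfloor>a k * real N\<rfloor> + 1"
        by linarith+
      then have "0 \<le> a k * real N - of_int \<lfloor>a k * real N\<rfloor>" "a k * real N - of_int \<lfloor>a k * real N\<rfloor> \<le> 1"
        by linarith+
      moreover have "a k - of_int \<lfloor>a k * real N\<rfloor> / real N = (a k * real N - of_int \<lfloor>a k * real N\<rfloor>) / real N"
        using assms(1) by (simp add: field_simps)
      ultimately show ?thesis using assms(1) by (simp add: divide_right_mono)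
    qed
    have "\<bar>tau \<eta> x ^ k\<bar> \<le> 1" using tx by (simp add: power_abs power_le_one)
    then show "\<bar>(a k - of_int \<lfloor>a k * real N\<rfloor> / real N) * tau \<eta> x ^ k\<bar> \<le> 1 / real N"
      unfolding abs_mult using e mult_mono[OF e \<open>\<bar>tau \<eta> x ^ k\<bar> \<le> 1\<close>] by simp
  qed
  also have "\<dots> = real t / real N" by simp
  finally show ?thesis .
qed

lemma cen_bound:
  assumes "N > 0" "jj \<in> PiE {..<t} (\<lambda>_. {- int N..int N})" and tx: "\<bar>tau \<eta> x\<bar> \<le> 1"
  shows "\<bar>cen \<eta> N t jj x\<bar> \<le> real t"
proof -
  have "\<bar>cen \<eta> N t jj x\<bar> \<le> (\<Sum>k<t. \<bar>of_int (jj k) / real N * tau \<eta> x ^ k\<bar>)"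
    unfolding cen_def by (rule sum_abs)
  also have "\<dots> \<le> (\<Sum>k<t. 1)"
  proof (rule sum_mono)
    fix k assume k: "k \<in> {..<t}"
    have "\<bar>jj k\<bar> \<le> int N" using assms(2) k by (auto simp: PiE_def Pi_def)
    then have "\<bar>of_int (jj k) / real N\<bar> \<le> 1" using assms(1) by (simp add: divide_simps)
    moreover have "\<bar>tau \<eta> x ^ k\<bar> \<le> 1" using tx by (simp add: power_abs power_le_one)
    ultimately show "\<bar>of_int (jj k) / real N * tau \<eta> x ^ k\<bar> \<le> 1"
      unfolding abs_mult by (metis abs_ge_zero mult_le_one)
  qed
  finally show ?thesis by simp
qed

lemma cen_meas[measurable]: "cen \<eta> N t jj \<in> borel_measurable (lebesgue_on I)"
  unfolding cen_def tau_def by measurable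

lemma dict_meas[measurable]: "(\<lambda>x. \<Sum>j<M. c j * dict_g \<eta> (b j) x) \<in> borel_measurable (lebesgue_on I)"
  unfolding dict_g_def by measurable

lemma covering:
  assumes eta: "0 < \<eta>" "\<eta> < 1" and p: "1 \<le> p" and N: "N > 0"
    and cnt: "(2 * N + 1) ^ t \<le> 2 ^ n"
  shows "entropy_number p {\<eta>..1} (B1 p {\<eta>..1} \<eta>) n
           \<le> ereal (4 * (qq \<eta> ^ t / (1 - qq \<eta>) + real t / real N))"
proof -
  define E where "E = qq \<eta> ^ t / (1 - qq \<eta>) + real t / real N"
  have q: "0 < qq \<eta>" "qq \<eta> < 1" using qq_bounds[OF eta] by auto
  have E0: "E > 0" using q unfolding E_def by (intro add_pos_nonneg) auto
  define G where "G = PiE {..<t} (\<lambda>_. {- int N..int N})"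
  define Cs where "Cs = (\<lambda>jj. cen \<eta> N t jj) ` G"
  have finG: "finite G" unfolding G_def by (intro finite_PiE) auto
  have cardG: "card G = (2 * N + 1) ^ t"
    unfolding G_def by (subst card_PiE) (auto simp: nat_add_distrib nat_mult_distrib)
  have fin: "finite Cs" using finG by (simp add: Cs_def)
  have card: "card Cs \<le> 2 ^ n" using card_image_le[OF finG, of "\<lambda>jj. cen \<eta> N t jj"] cardG cnt
    unfolding Cs_def by simp
  have inLp: "\<forall>c\<in>Cs. in_Lp p {\<eta>..1} c"
  proof
    fix c assume "c \<in> Cs"
    then obtain jj where jj: "jj \<in> G" "c = cen \<eta> N t jj" by (auto simp: Cs_def)
    show "in_Lp p {\<eta>..1} c"
      using jj cen_bound[OF N _ tau_bound[OF eta]] unfolding G_def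
      by (intro in_Lp_bounded[OF eta p, of _ "real t"]) auto
  qed
  have cov: "\<forall>f\<in>B1 p {\<eta>..1} \<eta>. \<exists>c\<in>Cs. Lp_dist p {\<eta>..1} f c \<le> ereal (4 * E)"
  proof
    fix f assume f: "f \<in> B1 p {\<eta>..1} \<eta>"
    then have mf: "f \<in> borel_measurable (lebesgue_on {\<eta>..1})" by (simp add: B1_def in_Lp_def)
    obtain h where h: "h \<in> dict_combs \<eta>" "Lp_dist p {\<eta>..1} f h < ereal E"
      using f E0 unfolding B1_def by blast
    from h(1) obtain M :: nat and c b :: "nat \<Rightarrow> real" where cb: "\<forall>j<M. 0 < b j" "(\<Sum>j<M. \<bar>c j\<bar>) \<le> 1"
      and hdef: "h = (\<lambda>x. \<Sum>j<M. c j * dict_g \<eta> (b j) x)"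
      unfolding dict_combs_def mem_Collect_eq by blast
    define a where "a = alpha \<eta> c b M"
    have a1: "\<forall>k. \<bar>a k\<bar> \<le> 1" using alpha_bound[OF eta cb] by (simp add: a_def)
    define jj where "jj = quant N t a"
    have jjG: "jj \<in> G" using quant_mem[OF N a1] by (simp add: jj_def G_def)
    have close: "\<forall>x\<in>{\<eta>..1}. \<bar>h x - cen \<eta> N t jj x\<bar> \<le> E"
    proof
      fix x assume x: "x \<in> {\<eta>..1}"
      have 1: "\<bar>h x - (\<Sum>k<t. a k * tau \<eta> x ^ k)\<bar> \<le> qq \<eta> ^ t / (1 - qq \<eta>)"
        using comb_approx[OF eta cb x] by (simp add: hdef a_def)
      have 2: "\<bar>(\<Sum>k<t. a k * tau \<eta> x ^ k) - cen \<eta> N t jj x\<bar> \<le> real t / real N"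
        using quant_err[OF N tau_bound[OF eta x]] by (simp add: jj_def)
      show "\<bar>h x - cen \<eta> N t jj x\<bar> \<le> E" using 1 2 unfolding E_def by linarith
    qed
    have mh: "h \<in> borel_measurable (lebesgue_on {\<eta>..1})" unfolding hdef by measurable
    have "Lp_dist p {\<eta>..1} f (cen \<eta> N t jj) \<le> ereal (4 * E)"
      by (rule Lp_tri[OF eta p mf mh cen_meas h(2) close E0])
    moreover have "cen \<eta> N t jj \<in> Cs" using jjG by (simp add: Cs_def)
    ultimately show "\<exists>c\<in>Cs. Lp_dist p {\<eta>..1} f c \<le> ereal (4 * E)" by blast
  qed
  have "ereal (4 * E) \<in> {ereal e | e. e > 0 \<and>
      (\<exists>Cs. finite Cs \<and> card Cs \<le> 2 ^ n \<and> (\<forall>c\<in>Cs. in_Lp p {\<eta>..1} c) \<and>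
            (\<forall>f\<in>B1 p {\<eta>..1} \<eta>. \<exists>c\<in>Cs. Lp_dist p {\<eta>..1} f c \<le> ereal e))}"
    using fin card inLp cov E0 by auto
  then show ?thesis unfolding entropy_number_def E_def[symmetric] by (rule Inf_lower)
qed

lemma count_bound:
  fixes n :: nat
  defines "t \<equiv> nat \<lfloor>sqrt (real n) / 2\<rfloor>"
  shows "(2 * 4 ^ t + 1) ^ t \<le> (2::nat) ^ n"
proof -
  have "2 * 4 ^ t + 1 \<le> (2::nat) ^ (2 * t + 2)"
    by (simp add: power_add power_mult)
  then have "(2 * 4 ^ t + 1) ^ t \<le> ((2::nat) ^ (2 * t + 2)) ^ t" by (rule power_mono) simp
  also have "\<dots> = 2 ^ ((2 * t + 2) * t)" by (rule power_mult[symmetric])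
  also have "\<dots> \<le> 2 ^ n"
  proof (rule power_increasing)
    show "(2 * t + 2) * t \<le> n"
    proof (cases "t = 0")
      case False
      have "real t \<le> sqrt (real n) / 2" unfolding t_def
        using of_int_floor_le[of "sqrt (real n) / 2"] by simp
      then have "2 * real t \<le> sqrt (real n)" by simp
      then have "(2 * real t) ^ 2 \<le> sqrt (real n) ^ 2" by (intro power_mono) auto
      then have "4 * real t * real t \<le> real n" by (simp add: power2_eq_square)
      then have "4 * t * t \<le> n" by (metis of_nat_le_iff of_nat_mult of_nat_numeral)
      moreover have "(2 * t + 2) * t \<le> 4 * t * t" using False by simp
      ultimately show ?thesis by linarith
    qed simp
  qed simp
  finally show ?thesis .
qed

lemma err_bound:
  fixes q :: real and n :: nat
  assumes q: "0 < q" "q < 1"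
  defines "t \<equiv> nat \<lfloor>sqrt (real n) / 2\<rfloor>" and "\<rho> \<equiv> max q (1/2)"
  shows "4 * (q ^ t / (1 - q) + real t / real (4 ^ t))
          \<le> (4 * (1 / (1 - q) + 1) / \<rho>) * exp (- (- ln \<rho> / 2) * sqrt (real n))"
proof -
  have r: "0 < \<rho>" "\<rho> < 1" "q \<le> \<rho>" "1/2 \<le> \<rho>" using q by (auto simp: \<rho>_def)
  have tt: "real t / real (4 ^ t) \<le> (1/2) ^ t"
  proof -
    have "real t \<le> 2 ^ t" using less_exp[of t] by (metis less_imp_le of_nat_le_iff of_nat_numeral of_nat_power)
    then have "real t / real (4 ^ t) \<le> 2 ^ t / (2 ^ t * 2 ^ t)"
      by (simp add: divide_right_mono power_mult_distrib[symmetric])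
    also have "\<dots> = (1/2) ^ t" by (simp add: power_one_over)
    finally show ?thesis .
  qed
  have "q ^ t / (1 - q) \<le> \<rho> ^ t / (1 - q)" using q r by (intro divide_right_mono power_mono) auto
  moreover have "(1/2::real) ^ t \<le> \<rho> ^ t" using r by (intro power_mono) auto
  ultimately have "4 * (q ^ t / (1 - q) + real t / real (4 ^ t)) \<le> 4 * (\<rho> ^ t / (1 - q) + \<rho> ^ t)"
    using tt by (intro mult_left_mono add_mono) (auto intro: order_trans)
  also have "\<dots> = 4 * (1 / (1 - q) + 1) * \<rho> ^ t" by (simp add: algebra_simps)
  also have "\<rho> ^ t \<le> exp (ln \<rho> / 2 * sqrt (real n)) / \<rho>"
  proof -
    have "\<rho> ^ t = exp (real t * ln \<rho>)" using r by (simp add: exp_of_nat_mult)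
    also have "\<dots> \<le> exp ((sqrt (real n) / 2 - 1) * ln \<rho>)"
    proof -
      have "sqrt (real n) / 2 - 1 \<le> real t" unfolding t_def
        using real_of_int_floor_gt_diff_one[of "sqrt (real n) / 2"] by simp
      moreover have "ln \<rho> \<le> 0" using r by simp
      ultimately show ?thesis by (simp add: mult_right_mono_neg)
    qed
    also have "\<dots> = exp (ln \<rho> / 2 * sqrt (real n)) / \<rho>"
      using r by (simp add: left_diff_distrib exp_diff)
    finally show ?thesis .
  qed
  then have "4 * (1 / (1 - q) + 1) * \<rho> ^ t \<le> 4 * (1 / (1 - q) + 1) * (exp (ln \<rho> / 2 * sqrt (real n)) / \<rho>)"
    using q by (intro mult_left_mono) auto
  finally show ?thesis by simp
qed

theorem corollary4p8:
  fixes \<eta> :: real and p :: ereal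
  assumes "0 < \<eta>" and "\<eta> < 1" and "1 \<le> p"
  shows "\<exists>C C6::real. C > 0 \<and> C6 > 0 \<and>
           (\<forall>n::nat. n \<ge> 1 \<longrightarrow>
              entropy_number p {\<eta>..1} (B1 p {\<eta>..1} \<eta>) n \<le> ereal (C * exp (- C6 * sqrt (real n))))"
proof -
  define q where "q = qq \<eta>"
  have q: "0 < q" "q < 1" using qq_bounds[OF assms(1,2)] by (auto simp: q_def)
  define \<rho> where "\<rho> = max q (1/2)"
  have r: "0 < \<rho>" "\<rho> < 1" using q by (auto simp: \<rho>_def)
  define C where "C = 4 * (1 / (1 - q) + 1) / \<rho>"
  define C6 where "C6 = - ln \<rho> / 2"
  have C: "C > 0" using q r unfolding C_def by (intro divide_pos_pos mult_pos_pos add_pos_pos) auto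
  have C6: "C6 > 0" using r by (simp add: C6_def)
  have "entropy_number p {\<eta>..1} (B1 p {\<eta>..1} \<eta>) n \<le> ereal (C * exp (- C6 * sqrt (real n)))" for n
  proof -
    define t where "t = nat \<lfloor>sqrt (real n) / 2\<rfloor>"
    have cnt: "(2 * 4 ^ t + 1) ^ t \<le> (2::nat) ^ n" using count_bound[of n] by (simp add: t_def)
    have "entropy_number p {\<eta>..1} (B1 p {\<eta>..1} \<eta>) n
           \<le> ereal (4 * (qq \<eta> ^ t / (1 - qq \<eta>) + real t / real (4 ^ t)))"
      by (rule covering[OF assms, of "4 ^ t" t n]) (use cnt in auto)
    also have "\<dots> \<le> ereal (C * exp (- C6 * sqrt (real n)))"
      using err_bound[OF q, of n] unfolding C_def C6_def \<rho>_def t_def q_def by simp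
    finally show ?thesis .
  qed
  then show ?thesis using C C6 by blast
qed
end
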